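(* Let $P$ be a polyhedron, $F$ a poset, and $f\colon P\to F$ a surjective open polyhedral map. Whenever $x<y$ in $F$, we have $f^{-1}[x]\subseteq\partial f^{-1}[y]$.
   Context: A polyhedron is a finite union of convex hulls of finite subsets of some $\mathbb R^d$. $\mathrm{Sub}_o P$ denotes the set of open subpolyhedra of $P$ (sets $P\setminus R$ with $R\subseteq P$ a polyhedron). A map $f\colon P\to F$ to a poset is polyhedral if $f^{-1}[U]\in\mathrm{Sub}_o P$ for every upset $U$ of $F$, and open if $f[W]$ is an upset of $F$ for every $W\in\mathrm{Sub}_o P$. We write $f^{-1}[x]$ for $f^{-1}[\{x\}]$. For a set $X\subseteq\mathbb R^d$, its boundary is $\partial X=\mathrm{Cl}\,X\setminus\mathrm{Int}^{\mathrm{Aff}}X$, where $\mathrm{Int}^{\mathrm{Aff}}$ is the interior taken inside the affine hull $\mathrm{Aff}\,X$ of $X$. *)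

theory Defs
  imports "HOL-Analysis.Analysis"
begin

text \<open>A (compact) polyhedron: a finite union of convex hulls of finite subsets.
  (Named poly_set to avoid clashing with HOL-Analysis' polyhedron, which means
  a finite intersection of half-spaces.)\<close>
definition poly_set :: "'a::euclidean_space set \<Rightarrow> bool" where
  "poly_set P \<longleftrightarrow> (\<exists>S. finite S \<and> (\<forall>A\<in>S. finite A) \<and> P = \<Union> ((\<lambda>A. convex hull A) ` S))"

definition Sub_o :: "'a::euclidean_space set \<Rightarrow> 'a set set" where
  "Sub_o P = {P - R | R. R \<subseteq> P \<and> poly_set R}"

definition is_upset :: "'b::order set \<Rightarrow> bool" where
  "is_upset U \<longleftrightarrow> (\<forall>x y. x \<in> U \<longrightarrow> x \<le> y \<longrightarrow> y \<in> U)"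

definition polyhedral_map :: "'a::euclidean_space set \<Rightarrow> ('a \<Rightarrow> 'b::order) \<Rightarrow> bool" where
  "polyhedral_map P f \<longleftrightarrow> (\<forall>U. is_upset U \<longrightarrow> {p \<in> P. f p \<in> U} \<in> Sub_o P)"

definition open_map_poly :: "'a::euclidean_space set \<Rightarrow> ('a \<Rightarrow> 'b::order) \<Rightarrow> bool" where
  "open_map_poly P f \<longleftrightarrow> (\<forall>W \<in> Sub_o P. is_upset (f ` W))"

definition bdry :: "'a::euclidean_space set \<Rightarrow> 'a set" where
  "bdry X = closure X - rel_interior X"

end

theory Submission
  imports Defs
begin

lemma small_nbhd:
  fixes P :: "'a::euclidean_space set"
  assumes "poly_set P" and "e > 0"
  shows "\<exists>R. R \<subseteq> P \<and> poly_set R \<and> p \<notin> R \<and> P - R \<subseteq> ball p e"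
proof -
  obtain S where S: "finite S" "\<forall>A\<in>S. finite A" "P = \<Union> ((\<lambda>A. convex hull A) ` S)"
    using assms(1) unfolding poly_set_def by blast
  define d where "d = e / real DIM('a)"
  have d: "d > 0" using assms(2) by (simp add: d_def)
  define H where "H = (\<lambda>i. {x. i \<bullet> x \<le> i \<bullet> p - d}) ` Basis \<union> (\<lambda>i. {x. i \<bullet> x \<ge> i \<bullet> p + d}) ` Basis"
  have finH: "finite H" by (simp add: H_def)
  have polyH: "\<forall>h\<in>H. polyhedron h" by (auto simp: H_def polyhedron_halfspace_le polyhedron_halfspace_ge)
  define g :: "'a set \<times> 'a set \<Rightarrow> 'a set" where "g = (\<lambda>(A,h). SOME v. finite v \<and> (convex hull A) \<inter> h = convex hull v)"
  have g: "finite (g (A,h)) \<and> (convex hull A) \<inter> h = convex hull (g (A,h))" if "A \<in> S" "h \<in> H" for A h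
  proof -
    have "polytope ((convex hull A) \<inter> h)"
      using that S(2) polyH by (simp add: polytope_Int_polyhedron polytope_convex_hull)
    then have "\<exists>v. finite v \<and> (convex hull A) \<inter> h = convex hull v" unfolding polytope_def by blast
    then show ?thesis unfolding g_def by (simp, rule someI_ex)
  qed
  define R where "R = \<Union> ((\<lambda>(A,h). (convex hull A) \<inter> h) ` (S \<times> H))"
  have "R \<subseteq> P" unfolding R_def S(3) by auto
  moreover have "poly_set R"
    unfolding poly_set_def
  proof (intro exI[of _ "g ` (S \<times> H)"] conjI)
    show "finite (g ` (S \<times> H))" using S(1) finH by simp
    show "\<forall>A\<in>g ` (S \<times> H). finite A" using g by auto
    show "R = \<Union> ((\<lambda>A. convex hull A) ` g ` (S \<times> H))"
    proof -
      have "\<And>z. z \<in> S \<times> H \<Longrightarrow> (\<lambda>(A,h). (convex hull A) \<inter> h) z = convex hull (g z)"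
        using g by auto
      then have "R = \<Union> ((\<lambda>z. convex hull (g z)) ` (S \<times> H))"
        unfolding R_def by (intro arg_cong[where f=Union] image_cong) auto
      then show ?thesis by (simp add: image_image)
    qed
  qed
  moreover have "p \<notin> R"
  proof -
    have "p \<notin> h" if "h \<in> H" for h using that d unfolding H_def by auto
    then show ?thesis unfolding R_def by auto
  qed
  moreover have "P - R \<subseteq> ball p e"
  proof
    fix x assume x: "x \<in> P - R"
    then obtain A where A: "A \<in> S" "x \<in> convex hull A" using S(3) by auto
    have "x \<notin> h" if "h \<in> H" for h using x A that unfolding R_def by auto
    then have lt: "\<bar>(x - p) \<bullet> i\<bar> < d" if "i \<in> Basis" for i
    proof -
      have "x \<notin> {x. i \<bullet> x \<le> i \<bullet> p - d}" "x \<notin> {x. i \<bullet> x \<ge> i \<bullet> p + d}"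
        using that \<open>\<And>h. h \<in> H \<Longrightarrow> x \<notin> h\<close> unfolding H_def by blast+
      moreover have "(x - p) \<bullet> i = i \<bullet> x - i \<bullet> p" by (simp add: inner_diff_right inner_commute[of "x - p" i])
      ultimately show ?thesis by simp
    qed
    have "dist p x = norm (x - p)" by (simp add: dist_norm norm_minus_commute)
    also have "\<dots> \<le> (\<Sum>i\<in>Basis. \<bar>(x - p) \<bullet> i\<bar>)" by (rule norm_le_l1)
    also have "\<dots> < (\<Sum>i\<in>(Basis::'a set). d)"
      using lt by (intro sum_strict_mono) auto
    also have "\<dots> = e" by (simp add: d_def)
    finally show "x \<in> ball p e" by simp
  qed
  ultimately show ?thesis by blast
qed

theorem lemma6p1:
  fixes P :: "'a::euclidean_space set" and f :: "'a \<Rightarrow> 'b::order"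
  assumes "poly_set P"
    and "f ` P = UNIV"
    and "open_map_poly P f"
    and "polyhedral_map P f"
    and "x < y"
  shows "{p \<in> P. f p = x} \<subseteq> bdry {p \<in> P. f p = y}"
proof
  fix p assume p: "p \<in> {p \<in> P. f p = x}"
  have "p \<in> closure {p \<in> P. f p = y}"
  proof (rule ccontr)
    assume "p \<notin> closure {p \<in> P. f p = y}"
    then obtain e where e: "e > 0" "ball p e \<inter> {p \<in> P. f p = y} = {}"
      by (metis closure_approachable disjoint_iff mem_ball dist_commute)
    obtain R where R: "R \<subseteq> P" "poly_set R" "p \<notin> R" "P - R \<subseteq> ball p e"
      using small_nbhd[OF assms(1) e(1)] by blast
    have "P - R \<in> Sub_o P" unfolding Sub_o_def using R by blast
    then have "is_upset (f ` (P - R))" using assms(3) unfolding open_map_poly_def by blast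
    moreover have "x \<in> f ` (P - R)" using p R by auto
    ultimately have "y \<in> f ` (P - R)" using assms(5) unfolding is_upset_def by auto
    then obtain q where "q \<in> P - R" "f q = y" by auto
    then show False using e R by auto
  qed
  moreover have "p \<notin> rel_interior {p \<in> P. f p = y}"
    using p assms(5) rel_interior_subset by fastforce
  ultimately show "p \<in> bdry {p \<in> P. f p = y}" unfolding bdry_def by blast
qed

end
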